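(* If the communication graph of a system is a tree, then (for any assignment of directions giving adjacent circles opposite directions) there is a single ring.
   Context: A system consists of pairwise disjoint unit circles $C_1,\dots,C_N$ in the plane and a communication range $r>0$; its communication graph $G$ has the circles as vertices, $C_i,C_j$ adjacent iff the distance between their centres is at most $2+r$. For an edge $(i,j)$, the link position $\phi_{ij}$ is the point of $C_i$ closest to $C_j$. A direction assignment gives each circle $C$ a direction $g(C)\in\{1,-1\}$ (counterclockwise/clockwise) with $g(C_i)=-g(C_j)$ for adjacent circles. Rings. Trace a point moving along a circle $C_i$ in direction $g(C_i)$; whenever it reaches a link position $\phi_{ij}$ of its current circle, it passes to $C_j$ at $\phi_{ji}$ and continues along $C_j$ in direction $g(C_j)$ (the motion of a robot that never meets anyone). This motion is periodic and the closed curve traced is a ring; every arc between consecutive link positions of a circle belongs to exactly one ring, so the circles decompose into rings overlapping only at link positions. *)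

theory Defs
  imports "HOL-Analysis.Analysis"
begin

text \<open>Circles C_0,...,C_{N-1} are unit circles in the plane (complex numbers) with
  centres c i.  Points of the plane are complex numbers.\<close>

definition comm_adj :: "nat \<Rightarrow> (nat \<Rightarrow> complex) \<Rightarrow> real \<Rightarrow> nat \<Rightarrow> nat \<Rightarrow> bool" where
  "comm_adj N c r i j \<longleftrightarrow> i < N \<and> j < N \<and> i \<noteq> j \<and> cmod (c i - c j) \<le> 2 + r"

definition link_pos :: "(nat \<Rightarrow> complex) \<Rightarrow> nat \<Rightarrow> nat \<Rightarrow> complex" where
  "link_pos c i j = c i + (c j - c i) / complex_of_real (cmod (c j - c i))"

definition links :: "nat \<Rightarrow> (nat \<Rightarrow> complex) \<Rightarrow> real \<Rightarrow> nat \<Rightarrow> complex set" where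
  "links N c r i = {link_pos c i j | j. comm_adj N c r i j}"

definition rot :: "(nat \<Rightarrow> complex) \<Rightarrow> (nat \<Rightarrow> real) \<Rightarrow> nat \<Rightarrow> complex \<Rightarrow> real \<Rightarrow> complex" where
  "rot c g i p u = c i + (p - c i) * cis (g i * u)"

definition graph_connected :: "nat \<Rightarrow> (nat \<Rightarrow> nat \<Rightarrow> bool) \<Rightarrow> bool" where
  "graph_connected N E \<longleftrightarrow> (\<forall>i<N. \<forall>j<N. E\<^sup>*\<^sup>* i j)"

definition graph_has_cycle :: "nat \<Rightarrow> (nat \<Rightarrow> nat \<Rightarrow> bool) \<Rightarrow> bool" where
  "graph_has_cycle N E \<longleftrightarrow> (\<exists>vs. 3 \<le> length vs \<and> distinct vs \<and> set vs \<subseteq> {..<N} \<and>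
      (\<forall>k. Suc k < length vs \<longrightarrow> E (vs ! k) (vs ! Suc k)) \<and> E (last vs) (hd vs))"

definition graph_tree :: "nat \<Rightarrow> (nat \<Rightarrow> nat \<Rightarrow> bool) \<Rightarrow> bool" where
  "graph_tree N E \<longleftrightarrow> 1 \<le> N \<and> graph_connected N E \<and> \<not> graph_has_cycle N E"

definition direction_assignment :: "nat \<Rightarrow> (nat \<Rightarrow> complex) \<Rightarrow> real \<Rightarrow> (nat \<Rightarrow> real) \<Rightarrow> bool" where
  "direction_assignment N c r g \<longleftrightarrow> (\<forall>i<N. g i \<in> {1, -1}) \<and>
      (\<forall>i j. comm_adj N c r i j \<longrightarrow> g i = - g j)"

text \<open>States of the moving point that starts at p0 on C_i0: the point is on circle i at p
  and about to move along C_i in direction g i.  After moving (a positive angle) to the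
  first link position phi_ij reached, it passes to C_j at phi_ji.\<close>
inductive ring_state :: "nat \<Rightarrow> (nat \<Rightarrow> complex) \<Rightarrow> real \<Rightarrow> (nat \<Rightarrow> real) \<Rightarrow> nat \<Rightarrow> complex
    \<Rightarrow> nat \<Rightarrow> complex \<Rightarrow> bool"
  for N c r g i0 p0 where
  start: "ring_state N c r g i0 p0 i0 p0"
| pass: "ring_state N c r g i0 p0 i p \<Longrightarrow> 0 < s \<Longrightarrow>
      (\<forall>u\<in>{0<..<s}. rot c g i p u \<notin> links N c r i) \<Longrightarrow>
      comm_adj N c r i j \<Longrightarrow> rot c g i p s = link_pos c i j \<Longrightarrow>
      ring_state N c r g i0 p0 j (link_pos c j i)"

definition ring_trace :: "nat \<Rightarrow> (nat \<Rightarrow> complex) \<Rightarrow> real \<Rightarrow> (nat \<Rightarrow> real) \<Rightarrow> nat \<Rightarrow> complex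
    \<Rightarrow> complex set" where
  "ring_trace N c r g i0 p0 = {rot c g i p s | i p s. ring_state N c r g i0 p0 i p \<and> 0 \<le> s \<and>
      (\<forall>u\<in>{0<..<s}. rot c g i p u \<notin> links N c r i)}"

end

theory Submission
  imports Defs
begin


lemma cis_inj:
  assumes s: "\<sigma> = 1 \<or> \<sigma> = -1" and a: "0 < a" "a \<le> 2*pi" and b: "0<b" "b \<le> 2*pi"
    and e: "cis (\<sigma>*a) = cis (\<sigma>*b)"
  shows "a = b"
proof -
  have "cis (\<sigma>*a) / cis (\<sigma>*b) = 1" using e by simp
  then have "cis (\<sigma>*(a-b)) = 1" by (simp add: cis_divide right_diff_distrib)
  then have "cos (\<sigma>*(a-b)) = 1" by (metis cis.sel(1) one_complex.sel(1))
  then obtain n::int where n: "\<sigma>*(a-b) = of_int n*2*pi" by (auto simp: cos_one_2pi_int)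
  have "\<bar>\<sigma>*(a-b)\<bar> < 2*pi" using s a b by auto
  then have "\<bar>of_int n * 2 * pi\<bar> < 2*pi" by (simp only: n)
  then have "\<bar>of_int n :: real\<bar> * (2*pi) < 1 * (2*pi)" by (simp add: abs_mult mult.assoc)
  then have "\<bar>of_int n :: real\<bar> < 1" using mult_less_cancel_right_pos[of "2*pi"] by simp
  then have "n = 0" by linarith
  then show ?thesis using n s by auto
qed

lemma cis_exists:
  assumes s: "\<sigma> = 1 \<or> \<sigma> = -1" and w: "norm w = 1"
  shows "\<exists>t. 0 < t \<and> t \<le> 2*pi \<and> cis (\<sigma>*t) = w"
proof -
  have w0: "w \<noteq> 0" using w by auto
  have weq: "cis (Arg w) = w" using cis_Arg[OF w0] w by (simp add: sgn_div_norm)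
  define \<theta> where "\<theta> = \<sigma> * Arg w"
  have st: "\<sigma> * \<theta> = Arg w" using s by (auto simp: \<theta>_def)
  define m where "m = \<lfloor>\<theta>/(2*pi)\<rfloor>"
  define t0 where "t0 = \<theta> - 2*pi*m"
  have m1: "of_int m \<le> \<theta>/(2*pi)" "\<theta>/(2*pi) < of_int m + 1" unfolding m_def by linarith+
  have "of_int m * (2*pi) \<le> \<theta>" using m1(1) by (simp add: field_simps)
  moreover have "\<theta> < (of_int m + 1) * (2*pi)" using m1(2) by (simp add: field_simps)
  ultimately have t0: "0 \<le> t0" "t0 < 2*pi" unfolding t0_def by (auto simp: algebra_simps)
  define t where "t = (if t0 = 0 then 2*pi else t0)"
  have "\<exists>k::int. t = \<theta> + 2*pi * of_int k"
    by (rule exI[of _ "if t0 = 0 then 1 - m else - m"]) (auto simp: t_def t0_def algebra_simps)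
  then obtain k::int where k: "t = \<theta> + 2*pi * of_int k" by blast
  have "cis (\<sigma>*t) = w"
  proof (cases "\<sigma> = 1")
    case True
    then have "cis (\<sigma>*t) = cis (Arg w) * cis (2*pi * of_int k)" using k st by (simp only: cis_mult) simp
    then show ?thesis using weq by (metis Ints_of_int cis_multiple_2pi mult.right_neutral)
  next
    case False
    then have sm: "\<sigma> = -1" using s by auto
    then have "cis (\<sigma>*t) = cis (Arg w) * cis (2*pi * of_int (-k))" using k st by (simp add: cis_mult algebra_simps)
    then show ?thesis using weq by (metis Ints_of_int cis_multiple_2pi mult.right_neutral)
  qed
  moreover have "0 < t" "t \<le> 2*pi" using t0 by (auto simp: t_def)
  ultimately show ?thesis by blast
qed



locale sys =
  fixes N :: nat and c :: "nat \<Rightarrow> complex" and r :: real and g :: "nat \<Rightarrow> real"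
    and i0 :: nat and p0 :: complex
  assumes disjoint: "\<And>i j. i < N \<Longrightarrow> j < N \<Longrightarrow> i \<noteq> j \<Longrightarrow> 2 < cmod (c i - c j)"
    and dir: "direction_assignment N c r g"
    and i0: "i0 < N" and p0: "cmod (p0 - c i0) = 1"
begin

abbreviation "adj \<equiv> comm_adj N c r"
abbreviation "reach \<equiv> ring_state N c r g i0 p0"
abbreviation "R \<equiv> rot c g"
abbreviation "ph \<equiv> link_pos c"

lemma adj_sym: "adj i j \<Longrightarrow> adj j i"
  by (auto simp: comm_adj_def norm_minus_commute)

lemma adj_lt: "adj i j \<Longrightarrow> i < N \<and> j < N \<and> i \<noteq> j"
  by (auto simp: comm_adj_def)

lemma g_pm: "i < N \<Longrightarrow> g i = 1 \<or> g i = -1"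
  using dir by (auto simp: direction_assignment_def)

lemma link_on: assumes "adj i j" shows "cmod (ph i j - c i) = 1"
proof -
  have "c j \<noteq> c i" using disjoint[of i j] adj_lt[OF assms] by force
  then have "c j - c i \<noteq> 0" by simp
  then show ?thesis by (simp add: link_pos_def norm_divide)
qed

lemma reach_on: "reach i p \<Longrightarrow> i < N \<and> cmod (p - c i) = 1"
proof (induction rule: ring_state.induct)
  case start
  then show ?case using i0 p0 by auto
next
  case (pass i p s j)
  then show ?case using link_on[OF adj_sym[OF pass(4)]] adj_lt[OF pass(4)] by auto
qed

lemma rot_on: "cmod (p - c i) = 1 \<Longrightarrow> cmod (R i p u - c i) = 1"
  by (simp add: rot_def norm_mult)

lemma rot_add: "R i (R i p a) b = R i p (a+b)"
  unfolding rot_def by (simp add: cis_mult[symmetric] distrib_left mult.assoc)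

lemma rot_0: "R i p 0 = p"
  by (simp add: rot_def)

lemma rot_inj:
  assumes "i < N" "cmod (p - c i) = 1" "0 < a" "a \<le> 2*pi" "0 < b" "b \<le> 2*pi"
    "R i p a = R i p b"
  shows "a = b"
proof -
  have "p - c i \<noteq> 0" using assms(2) by auto
  then have "cis (g i * a) = cis (g i * b)" using assms(7) by (simp add: rot_def)
  then show ?thesis using cis_inj[OF g_pm[OF assms(1)] assms(3-6)] by simp
qed

lemma rot_ex:
  assumes "i < N" "cmod (p - c i) = 1" "cmod (q - c i) = 1"
  shows "\<exists>t. 0 < t \<and> t \<le> 2*pi \<and> R i p t = q"
proof -
  have nz: "p - c i \<noteq> 0" using assms(2) by auto
  have "cmod ((q - c i)/(p - c i)) = 1" using assms by (simp add: norm_divide)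
  from cis_exists[OF g_pm[OF assms(1)] this] obtain t where
    t: "0 < t" "t \<le> 2*pi" "cis (g i * t) = (q - c i)/(p - c i)" by blast
  have "R i p t = q" using t(3) nz by (simp add: rot_def)
  then show ?thesis using t by blast
qed

lemma links_eq: "links N c r j = ph j ` {k. adj j k}"
  by (auto simp: links_def)

lemma finite_links: "finite (links N c r j)"
proof -
  have "{k. adj j k} \<subseteq> {..<N}" using adj_lt by auto
  then have "finite {k. adj j k}" using finite_subset by blast
  then show ?thesis by (simp add: links_eq)
qed

definition "Ret j k \<longleftrightarrow> (reach k (ph k j) \<longrightarrow> reach j (ph j k))"

end


locale sweep = sys +
  fixes j :: nat and p :: complex
  assumes rjp: "reach j p"
begin

lemma jN: "j < N" and pon: "cmod (p - c j) = 1"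
  using reach_on[OF rjp] by auto

definition "tau q = (THE t. 0 < t \<and> t \<le> 2*pi \<and> R j p t = q)"

lemma tau_prop: assumes "cmod (q - c j) = 1"
  shows "0 < tau q \<and> tau q \<le> 2*pi \<and> R j p (tau q) = q"
proof -
  have "\<exists>!t. 0 < t \<and> t \<le> 2*pi \<and> R j p t = q"
    using rot_ex[OF jN pon assms] rot_inj[OF jN pon] by metis
  then show ?thesis unfolding tau_def by (rule theI')
qed

lemma tau_unique: assumes "0 < t" "t \<le> 2*pi" "R j p t = q" shows "tau q = t"
proof -
  have q: "cmod (q - c j) = 1" using assms(3) rot_on[OF pon] by auto
  show ?thesis using tau_prop[OF q] rot_inj[OF jN pon, of "tau q" t] assms by auto
qed

abbreviation "L \<equiv> links N c r j"
definition "T = insert 0 (tau ` L)"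

lemma finT: "finite T" using finite_links by (simp add: T_def)

lemma tau_link: "adj j k \<Longrightarrow> 0 < tau (ph j k) \<and> tau (ph j k) \<le> 2*pi \<and> R j p (tau (ph j k)) = ph j k"
  using tau_prop[OF link_on] by blast

lemma tau_link_T: "adj j k \<Longrightarrow> tau (ph j k) \<in> T"
  by (auto simp: T_def links_def)

lemma T_cases: "x \<in> T \<Longrightarrow> x = 0 \<or> (\<exists>k. adj j k \<and> x = tau (ph j k))"
  by (auto simp: T_def links_def)

lemma free:
  assumes "0 \<le> t0" "t \<le> 2*pi" "\<And>x. x \<in> T \<Longrightarrow> \<not> (t0 < x \<and> x < t)"
  shows "\<forall>u\<in>{0<..<t - t0}. R j (R j p t0) u \<notin> L"
proof (intro ballI notI)
  fix u assume u: "u \<in> {0<..<t - t0}" and inL: "R j (R j p t0) u \<in> L"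
  then obtain k where k: "adj j k" "R j p (t0 + u) = ph j k" by (auto simp: links_def rot_add)
  have "tau (ph j k) = t0 + u" using tau_unique[of "t0+u"] k u assms by auto
  then show False using assms(3)[OF tau_link_T[OF k(1)]] u by auto
qed

lemma A_aux:
  "card {x\<in>T. x < tau (ph j k)} = n \<Longrightarrow> adj j k \<Longrightarrow>
   (\<forall>k'. adj j k' \<and> tau (ph j k') < tau (ph j k) \<longrightarrow> Ret j k') \<Longrightarrow> reach k (ph k j)"
proof (induction n arbitrary: k rule: less_induct)
  case (less n k)
  define s where "s = tau (ph j k)"
  define S where "S = {x\<in>T. x < s}"
  have s: "0 < s" "s \<le> 2*pi" "R j p s = ph j k" using tau_link[OF less(3)] by (auto simp: s_def)
  have finS: "finite S" using finT by (simp add: S_def)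
  have 0: "0 \<in> S" using s by (simp add: S_def T_def)
  define t1 where "t1 = Max S"
  have t1S: "t1 \<in> S" using Max_in[OF finS] 0 by (auto simp: t1_def)
  have t1ge: "0 \<le> t1" using Max_ge[OF finS 0] by (simp add: t1_def)
  have t1max: "\<And>x. x \<in> S \<Longrightarrow> x \<le> t1" using Max_ge[OF finS] by (simp add: t1_def)
  have t1s: "t1 < s" "t1 \<in> T" using t1S by (auto simp: S_def)
  have rt1: "reach j (R j p t1)"
  proof (cases "t1 = 0")
    case True then show ?thesis using rjp by (simp add: rot_0)
  next
    case False
    then obtain k' where k': "adj j k'" "t1 = tau (ph j k')" using T_cases[OF t1s(2)] by auto
    have ret: "Ret j k'" using less(4) k' t1s s_def by auto
    have sub: "{x\<in>T. x < t1} \<subset> S" using t1s by (auto simp: S_def)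
    have lt: "card {x\<in>T. x < t1} < n" using psubset_card_mono[OF finS sub] less(2) by (simp add: S_def s_def)
    have "reach k' (ph k' j)"
      using less(1)[OF lt _ k'(1)] k' less(4) t1s s_def by fastforce
    then have "reach j (ph j k')" using ret by (simp add: Ret_def)
    then show ?thesis using tau_link[OF k'(1)] k'(2) by simp
  qed
  have fr: "\<forall>u\<in>{0<..<s - t1}. R j (R j p t1) u \<notin> L"
    by (rule free[OF t1ge s(2)]) (use t1max in \<open>force simp: S_def\<close>)
  have "R j (R j p t1) (s - t1) = ph j k" using s by (simp add: rot_add)
  then show ?case using ring_state.pass[OF rt1 _ fr less(3)] t1s by simp
qed

lemma A: "adj j k \<Longrightarrow> (\<And>k'. adj j k' \<Longrightarrow> tau (ph j k') < tau (ph j k) \<Longrightarrow> Ret j k') \<Longrightarrow> reach k (ph k j)"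
  using A_aux by blast

lemma B:
  assumes ret: "\<And>k. adj j k \<Longrightarrow> Ret j k"
  shows "(\<forall>k. adj j k \<longrightarrow> reach k (ph k j)) \<and> sphere (c j) 1 \<subseteq> ring_trace N c r g i0 p0"
proof
  show "\<forall>k. adj j k \<longrightarrow> reach k (ph k j)" using A ret by blast
  show "sphere (c j) 1 \<subseteq> ring_trace N c r g i0 p0"
  proof
    fix q assume "q \<in> sphere (c j) 1"
    then have qon: "cmod (q - c j) = 1" by (simp add: dist_norm norm_minus_commute)
    define t where "t = tau q"
    have t: "0 < t" "t \<le> 2*pi" "R j p t = q" using tau_prop[OF qon] by (auto simp: t_def)
    define S where "S = {x\<in>T. x \<le> t}"
    have finS: "finite S" using finT by (simp add: S_def)
    have 0: "0 \<in> S" using t by (simp add: S_def T_def)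
    define t0 where "t0 = Max S"
    have t0S: "t0 \<in> S" using Max_in[OF finS] 0 by (auto simp: t0_def)
    have t0ge: "0 \<le> t0" using Max_ge[OF finS 0] by (simp add: t0_def)
    have t0max: "\<And>x. x \<in> S \<Longrightarrow> x \<le> t0" using Max_ge[OF finS] by (simp add: t0_def)
    have t0s: "t0 \<le> t" "t0 \<in> T" using t0S by (auto simp: S_def)
    have rt0: "reach j (R j p t0)"
    proof (cases "t0 = 0")
      case True then show ?thesis using rjp by (simp add: rot_0)
    next
      case False
      then obtain k' where k': "adj j k'" "t0 = tau (ph j k')" using T_cases[OF t0s(2)] by auto
      have "reach k' (ph k' j)" using A ret k'(1) by blast
      then have "reach j (ph j k')" using ret[OF k'(1)] by (simp add: Ret_def)
      then show ?thesis using tau_link[OF k'(1)] k'(2) by simp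
    qed
    have fr: "\<forall>u\<in>{0<..<t - t0}. R j (R j p t0) u \<notin> L"
      by (rule free[OF t0ge t(2)]) (use t0max in \<open>force simp: S_def\<close>)
    have "R j (R j p t0) (t - t0) = q" using t by (simp add: rot_add)
    then show "q \<in> ring_trace N c r g i0 p0"
      unfolding ring_trace_def using rt0 fr t0s by force
  qed
qed

end

context sys begin

lemma fail_step:
  assumes jk: "adj j k" and rk: "reach k (ph k j)" and nr: "\<not> reach j (ph j k)"
  shows "\<exists>k1. k1 \<noteq> j \<and> adj k k1 \<and> reach k1 (ph k1 k) \<and> \<not> reach k (ph k k1)"
proof -
  interpret sw: sweep N c r g i0 p0 k "ph k j" by unfold_locales (rule rk)
  define F where "F = {k1. adj k k1 \<and> \<not> Ret k k1}"
  show ?thesis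
  proof (cases "F = {}")
    case True
    then have "reach j (ph j k)" using sw.A[OF adj_sym[OF jk]] by (auto simp: F_def)
    then show ?thesis using nr by blast
  next
    case False
    have "F \<subseteq> {..<N}" using adj_lt by (auto simp: F_def)
    then have finF: "finite F" using finite_subset by blast
    define m where "m = Min ((\<lambda>k'. sw.tau (ph k k')) ` F)"
    have "m \<in> (\<lambda>k'. sw.tau (ph k k')) ` F" unfolding m_def using finF False by (intro Min_in) auto
    then obtain k1 where k1: "k1 \<in> F" "sw.tau (ph k k1) = m" by blast
    have mle: "\<And>k'. k' \<in> F \<Longrightarrow> m \<le> sw.tau (ph k k')" unfolding m_def using finF by auto
    have "reach k1 (ph k1 k)"
      using k1 mle by (intro sw.A) (auto simp: F_def, force)
    moreover have "k1 \<noteq> j" using k1 rk by (auto simp: F_def Ret_def)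
    ultimately show ?thesis using k1 by (auto simp: F_def Ret_def)
  qed
qed

end


lemma walk_cycle:
  fixes E :: "nat \<Rightarrow> nat \<Rightarrow> bool" and P :: "nat \<Rightarrow> nat \<Rightarrow> bool"
  assumes PE: "\<And>a b. P a b \<Longrightarrow> E a b"
    and Eirr: "\<And>a b. E a b \<Longrightarrow> a \<noteq> b \<and> a < N \<and> b < N"
    and step: "\<And>a b. P a b \<Longrightarrow> \<exists>d. d \<noteq> a \<and> P b d"
    and P0: "P uu vv"
  shows "graph_has_cycle N E"
proof -
  define st where "st = (\<lambda>(a::nat, b::nat). (b, SOME d. d \<noteq> a \<and> P b d))"
  define sq where "sq n = (st ^^ n) (uu, vv)" for n
  have inv: "P (fst (sq n)) (snd (sq n))" for n
  proof (induction n)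
    case 0 then show ?case using P0 by (simp add: sq_def)
  next
    case (Suc n)
    obtain a b where ab: "sq n = (a, b)" by force
    have "\<exists>d. d \<noteq> a \<and> P b d" using step Suc ab by simp
    then have "(SOME d. d \<noteq> a \<and> P b d) \<noteq> a \<and> P b (SOME d. d \<noteq> a \<and> P b d)" by (rule someI_ex)
    then show ?case using ab by (simp add: sq_def st_def)
  qed
  have sqS: "sq (Suc n) = (snd (sq n), SOME d. d \<noteq> fst (sq n) \<and> P (snd (sq n)) d)" for n
    by (simp add: sq_def st_def split: prod.splits)
  define w where "w n = fst (sq n)" for n
  have wS: "w (Suc n) = snd (sq n)" for n using sqS by (simp add: w_def)
  have wE: "E (w n) (w (Suc n))" for n using inv PE wS by (simp add: w_def)
  have w2: "w (Suc (Suc n)) \<noteq> w n" for n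
  proof -
    have "\<exists>d. d \<noteq> fst (sq n) \<and> P (snd (sq n)) d" using step inv by blast
    then have "(SOME d. d \<noteq> fst (sq n) \<and> P (snd (sq n)) d) \<noteq> fst (sq n)" by (rule someI2_ex) blast
    then show ?thesis using sqS wS by (simp add: w_def)
  qed
  have wN: "w n < N" for n using Eirr[OF wE[of n]] by simp
  have "\<not> inj_on w {..N}"
  proof
    assume "inj_on w {..N}"
    then have "card (w ` {..N}) = Suc N" by (simp add: card_image)
    moreover have "card (w ` {..N}) \<le> N"
      using card_mono[of "{..<N}" "w ` {..N}"] wN by auto
    ultimately show False by simp
  qed
  then obtain x y where xy: "x \<noteq> y" "w x = w y" unfolding inj_on_def by blast
  have ex: "\<exists>b a. a < b \<and> w a = w b"
  proof (cases "x < y")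
    case True then show ?thesis using xy by blast
  next
    case False then have "y < x" using xy(1) by simp
    then show ?thesis using xy by metis
  qed
  define b where "b = (LEAST b. \<exists>a<b. w a = w b)"
  have ex2: "\<exists>b. \<exists>a<b. w a = w b" using ex by blast
  have "\<exists>a<b. w a = w b" unfolding b_def by (rule LeastI_ex[OF ex2])
  then obtain a where a: "a < b" "w a = w b" by blast
  have inj: "inj_on w {..<b}"
  proof (rule inj_onI)
    fix x y assume xy: "x \<in> {..<b}" "y \<in> {..<b}" "w x = w y"
    show "x = y"
    proof (rule ccontr)
      assume "x \<noteq> y"
      have "\<exists>a<max x y. w a = w (max x y)"
      proof (cases "x < y")
        case True then show ?thesis using xy(3) by (intro exI[of _ x]) (auto simp: max_def)
      next
        case False then have "y < x" using \<open>x \<noteq> y\<close> by simp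
        then show ?thesis using xy(3) by (intro exI[of _ y]) (auto simp: max_def)
      qed
      then have "b \<le> max x y" unfolding b_def by (rule Least_le)
      then show False using xy by auto
    qed
  qed
  define vs where "vs = map w [a..<b]"
  have len: "length vs = b - a" by (simp add: vs_def)
  have "b \<noteq> Suc a" using Eirr[OF wE[of a]] a by auto
  moreover have "b \<noteq> Suc (Suc a)" using w2[of a] a by auto
  ultimately have l3: "3 \<le> length vs" using a len by linarith
  have dist: "distinct vs" unfolding vs_def
    by (rule distinct_map[THEN iffD2]) (use inj in \<open>auto intro: inj_on_subset\<close>)
  have sub: "set vs \<subseteq> {..<N}" using wN by (auto simp: vs_def)
  have edges: "\<forall>k. Suc k < length vs \<longrightarrow> E (vs ! k) (vs ! Suc k)"
    using wE by (auto simp: vs_def nth_map)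
  have "last vs = w (b - 1)" using a by (simp add: vs_def last_map)
  moreover have "hd vs = w b" using a by (simp add: vs_def hd_map)
  moreover have "E (w (b - 1)) (w b)" using wE[of "b-1"] a by simp
  ultimately have "E (last vs) (hd vs)" by simp
  then show ?thesis unfolding graph_has_cycle_def using l3 dist sub edges by blast
qed



theorem lemma12:
  fixes N :: nat and c :: "nat \<Rightarrow> complex" and r :: real and g :: "nat \<Rightarrow> real"
  assumes r_pos: "0 < r"
    and disjoint: "\<And>i j. i < N \<Longrightarrow> j < N \<Longrightarrow> i \<noteq> j \<Longrightarrow> 2 < cmod (c i - c j)"
    and distinct_links: "\<And>i j k. comm_adj N c r i j \<Longrightarrow> comm_adj N c r i k \<Longrightarrow>
                           link_pos c i j = link_pos c i k \<Longrightarrow> j = k"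
    and dir: "direction_assignment N c r g"
    and tree: "graph_tree N (comm_adj N c r)"
  shows "\<forall>i<N. \<forall>p. cmod (p - c i) = 1 \<longrightarrow>
           ring_trace N c r g i p = (\<Union>k<N. sphere (c k) 1)"
proof (intro allI impI)
  fix i p assume iN: "i < N" and pon: "cmod (p - c i) = 1"
  interpret S: sys N c r g i p using disjoint dir iN pon by unfold_locales auto
  have ret: "S.Ret j k" if "S.adj j k" for j k
  proof (rule ccontr)
    assume "\<not> S.Ret j k"
    have "graph_has_cycle N (comm_adj N c r)"
    proof (rule walk_cycle[where E = "comm_adj N c r" and
          P = "\<lambda>j k. S.adj j k \<and> \<not> S.Ret j k" and uu = j and vv = k])
      show "\<And>a b. S.adj a b \<and> \<not> S.Ret a b \<Longrightarrow> S.adj a b" by blast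
      show "\<And>a b. S.adj a b \<Longrightarrow> a \<noteq> b \<and> a < N \<and> b < N" using S.adj_lt by blast
      show "S.adj j k \<and> \<not> S.Ret j k" using that \<open>\<not> S.Ret j k\<close> by blast
      fix a b assume ab: "S.adj a b \<and> \<not> S.Ret a b"
      then have "S.reach b (link_pos c b a)" "\<not> S.reach a (link_pos c a b)" by (auto simp: S.Ret_def)
      then obtain d where "d \<noteq> a" "S.adj b d" "S.reach d (link_pos c d b)" "\<not> S.reach b (link_pos c b d)"
        using S.fail_step ab by blast
      then show "\<exists>d. d \<noteq> a \<and> S.adj b d \<and> \<not> S.Ret b d" by (auto simp: S.Ret_def)
    qed
    then show False using tree by (simp add: graph_tree_def)
  qed
  have reachv: "\<exists>q. S.reach j q" if "(comm_adj N c r)\<^sup>*\<^sup>* i j" for j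
    using that
  proof (induction rule: rtranclp_induct)
    case base then show ?case using ring_state.start by blast
  next
    case (step j k)
    then obtain q where q: "S.reach j q" by blast
    interpret W: sweep N c r g i p j q by unfold_locales (rule q)
    show ?case using W.B ret step(2) by blast
  qed
  show "ring_trace N c r g i p = (\<Union>k<N. sphere (c k) 1)"
  proof
    show "ring_trace N c r g i p \<subseteq> (\<Union>k<N. sphere (c k) 1)"
    proof
      fix x assume "x \<in> ring_trace N c r g i p"
      then obtain j q s where x: "x = rot c g j q s" "S.reach j q" unfolding ring_trace_def by blast
      then have "j < N" "cmod (q - c j) = 1" using S.reach_on by auto
      then show "x \<in> (\<Union>k<N. sphere (c k) 1)" using S.rot_on x
        by (auto simp: dist_norm norm_minus_commute)
    qed
    show "(\<Union>k<N. sphere (c k) 1) \<subseteq> ring_trace N c r g i p"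
    proof (rule UN_least)
      fix j assume "j \<in> {..<N}"
      then have "(comm_adj N c r)\<^sup>*\<^sup>* i j" using tree iN by (auto simp: graph_tree_def graph_connected_def)
      then obtain q where q: "S.reach j q" using reachv by blast
      interpret W: sweep N c r g i p j q by unfold_locales (rule q)
      show "sphere (c j) 1 \<subseteq> ring_trace N c r g i p" using W.B ret by blast
    qed
  qed
qed


end
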